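(* Let $f(x)=-\ln\Big(\sum_{i=1}^nw_ie^{-\|x-\mu_i\|^2/2}\Big)$ on $\mathbb{R}^d$, where $w_i>0$, $\sum_iw_i=1$, and $\|\mu_i\|\le D$ for all $i$. Then there exists a $\frac12$-strongly convex function $g:\mathbb{R}^d\to\mathbb{R}$ with $\sup_x|f(x)-g(x)|\le D^2$.
   Context: A function $h:\mathbb{R}^d\to\mathbb{R}$ is $\alpha$-strongly convex if for all $x,y$ and $t\in[0,1]$, $h(tx+(1-t)y)\le th(x)+(1-t)h(y)-\frac12\alpha t(1-t)\|x-y\|_2^2$. *)

theory Defs
  imports "HOL-Analysis.Analysis"
begin

definition strongly_convex_fun :: "real \<Rightarrow> ('a::real_inner \<Rightarrow> real) \<Rightarrow> bool" where
  "strongly_convex_fun \<alpha> h \<longleftrightarrow>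
     (\<forall>x y t. 0 \<le> t \<and> t \<le> 1 \<longrightarrow>
        h (t *\<^sub>R x + (1 - t) *\<^sub>R y)
          \<le> t * h x + (1 - t) * h y - (1/2) * \<alpha> * t * (1 - t) * (norm (x - y))\<^sup>2)"

end

theory Submission
  imports Defs
begin

lemma norm_comb_sq:
  fixes x y :: "'a::real_inner"
  shows "(norm (t *\<^sub>R x + (1 - t) *\<^sub>R y))\<^sup>2
      = t * (norm x)\<^sup>2 + (1 - t) * (norm y)\<^sup>2 - t * (1 - t) * (norm (x - y))\<^sup>2"
  unfolding power2_norm_eq_inner
  by (simp add: inner_simps algebra_simps inner_commute power2_eq_square)

lemma aux_ineq:
  fixes Z A B N ex ey hu t :: real
  assumes "Z = t * A + (1 - t) * B - t * (1 - t) * N"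
    and "t * ex \<le> t * (hu + A / 4)" and "(1 - t) * ey \<le> (1 - t) * (hu + B / 4)"
  shows "t * ex + (1 - t) * ey - t * (1 - t) * N / 4 \<le> hu + Z / 4"
proof -
  have "t * (hu + A / 4) + (1 - t) * (hu + B / 4) - t * (1 - t) * N / 4 = hu + Z / 4"
    unfolding assms(1) by (simp add: field_simps)
  then show ?thesis using assms(2,3) by linarith
qed

lemma aux2:
  fixes Z X Y N ex ey ez t :: real
  assumes "Z = t * X + (1 - t) * Y - t * (1 - t) * N"
    and "ez \<ge> t * ex + (1 - t) * ey - t * (1 - t) * N / 4"
  shows "Z / 2 - ez \<le> t * (X / 2 - ex) + (1 - t) * (Y / 2 - ey) - 1 / 2 * (1 / 2) * t * (1 - t) * N"
proof -
  have "t * (X / 2 - ex) + (1 - t) * (Y / 2 - ey) - 1 / 2 * (1 / 2) * t * (1 - t) * N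
     = Z / 2 - (t * ex + (1 - t) * ey - t * (1 - t) * N / 4)"
    unfolding assms(1) by (simp add: field_simps)
  then show ?thesis using assms(2) by linarith
qed

theorem mainTheorem10:
  fixes n :: nat and w :: "nat \<Rightarrow> real" and \<mu> :: "nat \<Rightarrow> real ^ 'd" and D :: real
    and f :: "real ^ 'd \<Rightarrow> real"
  assumes w_pos: "\<forall>i<n. w i > 0"
    and w_sum: "(\<Sum>i<n. w i) = 1"
    and mu_bd: "\<forall>i<n. norm (\<mu> i) \<le> D"
    and f_def: "\<forall>x. f x = - ln (\<Sum>i<n. w i * exp (- (norm (x - \<mu> i))\<^sup>2 / 2))"
  shows "\<exists>g :: real ^ 'd \<Rightarrow> real. strongly_convex_fun (1/2) g \<and>
           (\<forall>x. \<bar>f x - g x\<bar> \<le> D\<^sup>2)"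
proof -
  define P where "P x = (\<Sum>i<n. w i * exp (- (norm (x - \<mu> i))\<^sup>2 / 2))" for x :: "real ^ 'd"
  define h where "h x = (norm x)\<^sup>2 / 2 + ln (P x)" for x
  define e where "e x = Inf ((\<lambda>u. h u + (norm (x - u))\<^sup>2 / 4) ` UNIV)" for x
  define g where "g x = (norm x)\<^sup>2 / 2 - e x" for x
  have n0: "{..<n} \<noteq> {}" using w_sum by auto
  have Ppos: "P x > 0" for x
    unfolding P_def using n0 w_pos by (intro sum_pos) auto
  have lip: "h u \<ge> h x - D * norm (u - x)" for u x
  proof -
    define c where "c = (norm x)\<^sup>2 / 2 - (norm u)\<^sup>2 / 2 - D * norm (u - x)"
    have trm: "exp (- (norm (u - \<mu> i))\<^sup>2 / 2) \<ge> exp (- (norm (x - \<mu> i))\<^sup>2 / 2) * exp c"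
      if "i < n" for i
    proof -
      have cs: "inner (u - x) (\<mu> i) \<ge> - (norm (u - x) * D)"
      proof -
        have "\<bar>inner (u - x) (\<mu> i)\<bar> \<le> norm (u - x) * norm (\<mu> i)"
          by (rule Cauchy_Schwarz_ineq2)
        also have "\<dots> \<le> norm (u - x) * D" using mu_bd that by (simp add: mult_left_mono)
        finally show ?thesis by linarith
      qed
      have "- (norm (x - \<mu> i))\<^sup>2 / 2 + c \<le> - (norm (u - \<mu> i))\<^sup>2 / 2"
        using cs unfolding c_def
        by (simp add: power2_norm_eq_inner inner_simps algebra_simps inner_commute field_simps)
      then show ?thesis by (simp add: exp_add[symmetric])
    qed
    have "P u \<ge> P x * exp c"
      unfolding P_def sum_distrib_right
      using trm w_pos by (intro sum_mono) (simp add: mult.assoc mult_left_mono less_imp_le)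
    then have "ln (P u) \<ge> ln (P x * exp c)"
      using Ppos by (simp add: ln_le_cancel_iff)
    also have "ln (P x * exp c) = ln (P x) + c" using Ppos[of x] by (simp add: ln_mult)
    finally show ?thesis unfolding h_def c_def by (simp add: norm_minus_commute)
  qed
  have lower: "h u + (norm (x - u))\<^sup>2 / 4 \<ge> h x - D\<^sup>2" for x u
  proof -
    have "0 \<le> (norm (x - u) / 2 - D)\<^sup>2" by simp
    then have "(norm (x - u))\<^sup>2 / 4 - D * norm (x - u) + D\<^sup>2 \<ge> 0"
      by (simp add: power2_eq_square algebra_simps)
    then show ?thesis using lip[of x u] by (simp add: norm_minus_commute)
  qed
  have bdd: "bdd_below ((\<lambda>u. h u + (norm (x - u))\<^sup>2 / 4) ` UNIV)" for x
    using lower by (intro bdd_belowI2) blast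
  have e_le: "e x \<le> h u + (norm (x - u))\<^sup>2 / 4" for x u
    unfolding e_def using bdd by (intro cInf_lower) auto
  have e_ge: "e x \<ge> c" if "\<And>u. c \<le> h u + (norm (x - u))\<^sup>2 / 4" for x c
    unfolding e_def using that by (intro cInf_greatest) auto
  have "strongly_convex_fun (1/2) g"
    unfolding strongly_convex_fun_def
  proof (intro allI impI)
    fix x y :: "real ^ 'd" and t :: real
    assume t: "0 \<le> t \<and> t \<le> 1"
    define z where "z = t *\<^sub>R x + (1 - t) *\<^sub>R y"
    have ez: "e z \<ge> t * e x + (1 - t) * e y - t * (1 - t) * (norm (x - y))\<^sup>2 / 4"
    proof (rule e_ge)
      fix u
      have zu: "z - u = t *\<^sub>R (x - u) + (1 - t) *\<^sub>R (y - u)"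
        unfolding z_def by (simp add: algebra_simps)
      have "(norm (z - u))\<^sup>2 = t * (norm (x - u))\<^sup>2 + (1 - t) * (norm (y - u))\<^sup>2
              - t * (1 - t) * (norm (x - y))\<^sup>2"
        unfolding zu norm_comb_sq by simp
      moreover have "t * e x \<le> t * (h u + (norm (x - u))\<^sup>2 / 4)"
        using t e_le by (simp add: mult_left_mono)
      moreover have "(1 - t) * e y \<le> (1 - t) * (h u + (norm (y - u))\<^sup>2 / 4)"
        using t e_le by (simp add: mult_left_mono)
      ultimately show "t * e x + (1 - t) * e y - t * (1 - t) * (norm (x - y))\<^sup>2 / 4
          \<le> h u + (norm (z - u))\<^sup>2 / 4"
        by (rule aux_ineq)
    qed
    have "(norm z)\<^sup>2 = t * (norm x)\<^sup>2 + (1 - t) * (norm y)\<^sup>2 - t * (1 - t) * (norm (x - y))\<^sup>2"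
      unfolding z_def by (rule norm_comb_sq)
    then show "g (t *\<^sub>R x + (1 - t) *\<^sub>R y)
          \<le> t * g x + (1 - t) * g y - 1 / 2 * (1 / 2) * t * (1 - t) * (norm (x - y))\<^sup>2"
      unfolding g_def z_def[symmetric] by (rule aux2[OF _ ez])
  qed
  moreover have "\<forall>x. \<bar>f x - g x\<bar> \<le> D\<^sup>2"
  proof
    fix x
    have "f x - g x = e x - h x" unfolding f_def[rule_format] g_def h_def P_def by simp
    moreover have "e x \<le> h x" using e_le[of x x] by simp
    moreover have "e x \<ge> h x - D\<^sup>2" using lower by (intro e_ge) blast
    ultimately show "\<bar>f x - g x\<bar> \<le> D\<^sup>2" by linarith
  qed
  ultimately show ?thesis by blast
qed

end
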